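(* Let $(\psi,\eta,\alpha)$ be a solution of the conformal solitary-wave problem (W1)–(W8) and let $v$ be its vertical velocity in conformal variables. If $v<0$ in $\Gamma^+\cup\mathcal R^+$, then $\eta_x<0$ in $\Gamma^+\cup\mathcal R^+$.
   Context: Standing setup: $\mathcal R=\{(x,y):0<y<1\}$, $\Gamma=\{y=1\}$, $B=\{y=0\}$, $\mathcal R^+=\mathcal R\cap\{x>0\}$, $\Gamma^+=\Gamma\cap\{x>0\}$, $\beta\in(0,1)$. $\gamma\in C^{2,1}_{\rm loc}(\mathbb R)$; $\psi_{\rm triv}''=-\gamma(\psi_{\rm triv})$ on $[0,1]$, $\psi_{\rm triv}(0)=0$, $\psi_{\rm triv}(1)=1$, $\psi_{\rm triv}'>0$ on $[0,1]$; $\mu=\psi_{\rm triv}'(1)^2$. Given $\alpha\in\mathbb R$, the problem for $(\psi,\eta)$ is: (W1) $\Delta\psi=-\gamma(\psi)|\nabla\eta|^2$ in $\mathcal R$; (W2) $\psi=1$ on $\Gamma$, $\psi=0$ on $B$; (W3) $\psi_y^2=(\mu-2\alpha(\eta-1))|\nabla\eta|^2$ on $\Gamma$; (W4) $\Delta\eta=0$ in $\mathcal R$, $\eta=0$ on $B$; (W5) $\psi(x,y)\to\psi_{\rm triv}(y)$, $\eta(x,y)\to y$ as $x\to\pm\infty$ uniformly in $y$; (W6) $\psi,\eta\in C^{3+\beta}_b(\overline{\mathcal R})$; (W7) $\psi,\eta$ even in $x$; (W8) $\inf_{\mathcal R}(\mu-2\alpha(\eta-1))|\nabla\eta|^2>0$.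 Velocity in conformal variables: $u=\dfrac{\psi_x\eta_x+\psi_y\eta_y}{\eta_x^2+\eta_y^2}$, $v=\dfrac{\psi_y\eta_x-\psi_x\eta_y}{\eta_x^2+\eta_y^2}$. *)

theory Defs
  imports "HOL-Analysis.Analysis"
begin

definition stripR :: "(real \<times> real) set" where
  "stripR = {(x, y). 0 < y \<and> y < 1}"

definition stripClosed :: "(real \<times> real) set" where
  "stripClosed = {(x, y). 0 \<le> y \<and> y \<le> 1}"

definition GammaSet :: "(real \<times> real) set" where
  "GammaSet = {(x, y). y = 1}"

definition BottomSet :: "(real \<times> real) set" where
  "BottomSet = {(x, y). y = 0}"

definition stripR_plus :: "(real \<times> real) set" where
  "stripR_plus = {(x, y). 0 < y \<and> y < 1 \<and> 0 < x}"

definition Gamma_plus :: "(real \<times> real) set" where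
  "Gamma_plus = {(x, y). y = 1 \<and> 0 < x}"

text \<open>Partial derivatives, taken as (one-sided on the boundary) derivatives
  within the closed strip; in the open strip they are ordinary partial derivatives.\<close>

definition pdx :: "((real \<times> real) \<Rightarrow> real) \<Rightarrow> (real \<times> real) \<Rightarrow> real" where
  "pdx f p = frechet_derivative f (at p within stripClosed) (1, 0)"

definition pdy :: "((real \<times> real) \<Rightarrow> real) \<Rightarrow> (real \<times> real) \<Rightarrow> real" where
  "pdy f p = frechet_derivative f (at p within stripClosed) (0, 1)"

definition lap :: "((real \<times> real) \<Rightarrow> real) \<Rightarrow> (real \<times> real) \<Rightarrow> real" where
  "lap f p = pdx (pdx f) p + pdy (pdy f) p"

definition gradsq :: "((real \<times> real) \<Rightarrow> real) \<Rightarrow> (real \<times> real) \<Rightarrow> real" where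
  "gradsq f p = (pdx f p)\<^sup>2 + (pdy f p)\<^sup>2"

fun Ckb :: "nat \<Rightarrow> ((real \<times> real) \<Rightarrow> real) \<Rightarrow> bool" where
  "Ckb 0 f = (continuous_on stripClosed f \<and> bounded (f ` stripClosed))"
| "Ckb (Suc k) f = (continuous_on stripClosed f \<and> bounded (f ` stripClosed)
      \<and> (\<forall>p\<in>stripClosed. f differentiable (at p within stripClosed))
      \<and> Ckb k (pdx f) \<and> Ckb k (pdy f))"

definition holder_on :: "real \<Rightarrow> (real \<times> real) set \<Rightarrow> ((real \<times> real) \<Rightarrow> real) \<Rightarrow> bool" where
  "holder_on b S g = (\<exists>C. \<forall>p\<in>S. \<forall>q\<in>S. \<bar>g p - g q\<bar> \<le> C * dist p q powr b)"

definition C3beta_b :: "real \<Rightarrow> ((real \<times> real) \<Rightarrow> real) \<Rightarrow> bool" where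
  "C3beta_b b f = (Ckb 3 f \<and>
     (\<forall>D1\<in>{pdx, pdy}. \<forall>D2\<in>{pdx, pdy}. \<forall>D3\<in>{pdx, pdy}.
        holder_on b stripClosed (D1 (D2 (D3 f)))))"

definition C21_loc :: "(real \<Rightarrow> real) \<Rightarrow> bool" where
  "C21_loc g = ((\<forall>t. g differentiable (at t)) \<and> (\<forall>t. deriv g differentiable (at t))
     \<and> (\<forall>a b. \<exists>L. \<forall>s\<in>{a..b}. \<forall>t\<in>{a..b}.
           \<bar>deriv (deriv g) s - deriv (deriv g) t\<bar> \<le> L * \<bar>s - t\<bar>))"

definition vel_u :: "((real \<times> real) \<Rightarrow> real) \<Rightarrow> ((real \<times> real) \<Rightarrow> real) \<Rightarrow> (real \<times> real) \<Rightarrow> real" where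
  "vel_u psi eta p = (pdx psi p * pdx eta p + pdy psi p * pdy eta p) / gradsq eta p"

definition vel_v :: "((real \<times> real) \<Rightarrow> real) \<Rightarrow> ((real \<times> real) \<Rightarrow> real) \<Rightarrow> (real \<times> real) \<Rightarrow> real" where
  "vel_v psi eta p = (pdy psi p * pdx eta p - pdx psi p * pdy eta p) / gradsq eta p"

text \<open>The conformal solitary-wave problem (W1)-(W8), for given gamma, trivial
  solution psit (with derivative psit'), mu and Hoelder exponent b.\<close>

definition solitary_wave ::
  "(real \<Rightarrow> real) \<Rightarrow> (real \<Rightarrow> real) \<Rightarrow> real \<Rightarrow> real \<Rightarrow>
   ((real \<times> real) \<Rightarrow> real) \<Rightarrow> ((real \<times> real) \<Rightarrow> real) \<Rightarrow> real \<Rightarrow> bool" where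
  "solitary_wave gam psit mu b psi eta alpha =
     ((\<forall>p\<in>stripR. lap psi p = - gam (psi p) * gradsq eta p)
    \<and> (\<forall>p\<in>GammaSet. psi p = 1) \<and> (\<forall>p\<in>BottomSet. psi p = 0)
    \<and> (\<forall>p\<in>GammaSet. (pdy psi p)\<^sup>2 = (mu - 2 * alpha * (eta p - 1)) * gradsq eta p)
    \<and> (\<forall>p\<in>stripR. lap eta p = 0) \<and> (\<forall>p\<in>BottomSet. eta p = 0)
    \<and> (\<forall>e>0. \<exists>M. \<forall>x y. M \<le> \<bar>x\<bar> \<and> 0 \<le> y \<and> y \<le> 1 \<longrightarrow>
          \<bar>psi (x, y) - psit y\<bar> < e \<and> \<bar>eta (x, y) - y\<bar> < e)
    \<and> C3beta_b b psi \<and> C3beta_b b eta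
    \<and> (\<forall>x y. (x, y) \<in> stripClosed \<longrightarrow> psi (- x, y) = psi (x, y) \<and> eta (- x, y) = eta (x, y))
    \<and> (\<exists>c>0. \<forall>p\<in>stripR. c \<le> (mu - 2 * alpha * (eta p - 1)) * gradsq eta p))"

end

theory Submission
  imports Defs
begin

lemma mvt_within:
  fixes g g' :: "real \<Rightarrow> real"
  assumes "a < b" "\<And>t. t \<in> {a..b} \<Longrightarrow> (g has_real_derivative g' t) (at t within {a..b})"
  shows "\<exists>z. a < z \<and> z < b \<and> g b - g a = (b - a) * g' z"
proof -
  have c: "continuous_on {a..b} g" using assms(2) by (rule DERIV_continuous_on)
  have d: "\<And>x. a < x \<Longrightarrow> x < b \<Longrightarrow> (g has_real_derivative g' x) (at x)"
    using assms(2) at_within_Icc_at by (metis atLeastAtMost_iff less_eq_real_def)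
  obtain l z where "a < z" "z < b" "DERIV g z :> l" "g b - g a = (b - a) * l"
    using MVT[OF assms(1) c] d real_differentiable_def by blast
  moreover have "l = g' z" using d[OF \<open>a<z\<close> \<open>z<b\<close>] \<open>DERIV g z :> l\<close> DERIV_unique by blast
  ultimately show ?thesis by blast
qed

lemma taylor_bound:
  fixes g g' g'' :: "real \<Rightarrow> real"
  assumes "a < b"
    and d1: "\<And>t. t \<in> {a..b} \<Longrightarrow> (g has_real_derivative g' t) (at t within {a..b})"
    and d2: "\<And>t. t \<in> {a..b} \<Longrightarrow> (g' has_real_derivative g'' t) (at t within {a..b})"
    and C: "\<And>t. t \<in> {a..b} \<Longrightarrow> \<bar>g'' t\<bar> \<le> C"
  shows "\<bar>g b - g a - (b - a) * g' b\<bar> \<le> C * (b - a)\<^sup>2"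
proof -
  obtain z where z: "a < z" "z < b" "g b - g a = (b - a) * g' z" using mvt_within[OF assms(1) d1] by blast
  have "(g' has_real_derivative g'' t) (at t within {z..b})" if "t \<in> {z..b}" for t
  proof -
    have "t \<in> {a..b}" using that z by simp
    from DERIV_subset[OF d2[OF this]] show ?thesis using z by simp
  qed
  then obtain w where w: "z < w" "w < b" "g' b - g' z = (b - z) * g'' w"
    using mvt_within[OF z(2)] by blast
  have Cw: "\<bar>g'' w\<bar> \<le> C" using C w z by simp
  have "\<bar>g' b - g' z\<bar> = (b - z) * \<bar>g'' w\<bar>" using w z by (simp add: abs_mult)
  also have "\<dots> \<le> (b - a) * C"
    using mult_mono[of "b - z" "b - a" "\<bar>g'' w\<bar>" C] Cw z w by simp
  finally have e1: "\<bar>g' b - g' z\<bar> \<le> (b - a) * C" .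
  have "g b - g a - (b - a) * g' b = (b - a) * (g' z - g' b)" using z(3) by (simp add: right_diff_distrib)
  hence "\<bar>g b - g a - (b - a) * g' b\<bar> = (b - a) * \<bar>g' b - g' z\<bar>" using assms(1) by (simp add: abs_mult abs_minus_commute)
  also have "\<dots> \<le> (b - a) * ((b - a) * C)" using e1 assms(1) by (simp add: mult_left_mono)
  also have "\<dots> = C * (b - a)\<^sup>2" by (simp add: power2_eq_square)
  finally show ?thesis .
qed

lemma sec_max:
  fixes g g' :: "real \<Rightarrow> real"
  assumes r: "r > 0"
    and d1: "\<And>t. \<bar>t - t0\<bar> < r \<Longrightarrow> (g has_real_derivative g' t) (at t)"
    and d2: "(g' has_real_derivative A) (at t0)"
    and mx: "\<And>t. \<bar>t - t0\<bar> < r \<Longrightarrow> g t \<le> g t0"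
  shows "A \<le> 0"
proof (rule ccontr)
  assume "\<not> A \<le> 0"
  hence A: "A > 0" by simp
  have g0: "g' t0 = 0"
    using DERIV_local_max[OF d1[of t0] r] mx r by (simp add: abs_minus_commute)
  obtain d where d: "d > 0" "\<And>h. h > 0 \<Longrightarrow> h < d \<Longrightarrow> g' t0 < g' (t0 + h)"
    using DERIV_pos_inc_right[OF d2 A] by blast
  define h1 where "h1 = min d r / 2"
  have h1: "0 < h1" "h1 < d" "h1 < r" using d r by (auto simp: h1_def)
  have "\<forall>t. t0 \<le> t \<and> t \<le> t0 + h1 \<longrightarrow> DERIV g t :> g' t"
    using h1 by (intro allI impI d1) auto
  then obtain z where z: "t0 < z" "z < t0 + h1" "g (t0 + h1) - g t0 = (t0 + h1 - t0) * g' z"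
    using MVT2[of t0 "t0 + h1" g g'] h1 by auto
  have "g' z > 0" using d(2)[of "z - t0"] z h1 g0 by auto
  hence "h1 * g' z > 0" using h1 by simp
  hence "g (t0 + h1) > g t0" using z by simp
  moreover have "g (t0 + h1) \<le> g t0" using mx h1 by auto
  ultimately show False by simp
qed

definition Dif :: "((real \<times> real) \<Rightarrow> real) \<Rightarrow> bool" where
  "Dif f = (\<forall>p\<in>stripClosed. f differentiable (at p within stripClosed))"

lemma lin_comp:
  fixes F :: "real \<times> real \<Rightarrow> real" and h :: real
  assumes "bounded_linear F"
  shows "F (h, 0) = h * F (1, 0)" "F (0, h) = h * F (0, 1)"
proof -
  note sc = linear.scaleR[OF bounded_linear.linear[OF assms]]
  show "F (h, 0) = h * F (1, 0)" using sc[of h "(1, 0)"] by simp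
  show "F (0, h) = h * F (0, 1)" using sc[of h "(0, 1)"] by simp
qed

lemma pdx_line:
  assumes "Dif f" "0 \<le> y" "y \<le> 1"
  shows "((\<lambda>t. f (t, y)) has_real_derivative pdx f (t, y)) (at t)"
proof -
  let ?F = "\<lambda>p. frechet_derivative f (at p within stripClosed)"
  have fd: "\<And>p. p \<in> stripClosed \<Longrightarrow> (f has_derivative ?F p) (at p within stripClosed)"
    using assms(1) unfolding Dif_def by (simp add: frechet_derivative_works)
  have ld: "((\<lambda>t. (t, y)) has_derivative (\<lambda>h. (h, 0))) (at t within UNIV)"
    by (rule has_derivative_Pair) (auto intro: has_derivative_ident has_derivative_const)
  have im: "(\<lambda>t. (t, y)) ` UNIV \<subseteq> stripClosed" using assms unfolding stripClosed_def by blast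
  have "((\<lambda>t. f (t, y)) has_derivative (\<lambda>h. ?F (t, y) (h, 0))) (at t within UNIV)"
    by (rule has_derivative_in_compose2[OF fd im UNIV_I ld])
  moreover have "(\<lambda>h. ?F (t, y) (h, 0)) = (*) (pdx f (t, y))"
  proof -
    have mem: "(t, y) \<in> stripClosed" using assms by (simp add: stripClosed_def)
    have bl: "bounded_linear (?F (t, y))" by (rule has_derivative_bounded_linear[OF fd[OF mem]])
    show ?thesis unfolding pdx_def by (rule ext, subst lin_comp(1)[OF bl], rule mult.commute)
  qed
  ultimately show ?thesis by (simp add: has_field_derivative_def)
qed

lemma pdy_line:
  assumes "Dif f" "0 \<le> s" "s \<le> 1"
  shows "((\<lambda>s. f (x, s)) has_real_derivative pdy f (x, s)) (at s within {0..1})"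
proof -
  let ?F = "\<lambda>p. frechet_derivative f (at p within stripClosed)"
  have fd: "\<And>p. p \<in> stripClosed \<Longrightarrow> (f has_derivative ?F p) (at p within stripClosed)"
    using assms(1) unfolding Dif_def by (simp add: frechet_derivative_works)
  have ld: "((\<lambda>s. (x, s)) has_derivative (\<lambda>h. (0, h))) (at s within {0..1})"
    by (auto intro!: derivative_eq_intros)
  have "((\<lambda>s. f (x, s)) has_derivative (\<lambda>h. ?F (x, s) (0, h))) (at s within {0..1})"
    by (rule has_derivative_in_compose2[OF fd _ _ ld]) (use assms in \<open>auto simp: stripClosed_def\<close>)
  moreover have "(\<lambda>h. ?F (x, s) (0, h)) = (*) (pdy f (x, s))"
  proof -
    have mem: "(x, s) \<in> stripClosed" using assms by (simp add: stripClosed_def)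
    have bl: "bounded_linear (?F (x, s))" by (rule has_derivative_bounded_linear[OF fd[OF mem]])
    show ?thesis unfolding pdy_def by (rule ext, subst lin_comp(2)[OF bl], rule mult.commute)
  qed
  ultimately show ?thesis by (simp add: has_field_derivative_def)
qed

lemma pdy_line_at:
  assumes "Dif f" "0 < s" "s < 1"
  shows "((\<lambda>s. f (x, s)) has_real_derivative pdy f (x, s)) (at s)"
proof -
  have e: "at s within {0..1} = at s" using assms by (intro at_within_Icc_at)
  have "0 \<le> s" "s \<le> 1" using assms by simp_all
  from pdy_line[OF assms(1) this, of x] show ?thesis unfolding e .
qed

lemma Ckb_Suc_D:
  assumes "Ckb (Suc k) f"
  shows "Dif f" "Ckb k (pdx f)" "Ckb k (pdy f)" "continuous_on stripClosed f" "bounded (f ` stripClosed)"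
  using assms unfolding Dif_def by simp_all

lemma Ckb_0_D:
  assumes "Ckb k f"
  shows "continuous_on stripClosed f \<and> bounded (f ` stripClosed)"
proof (cases k)
  case 0
  thus ?thesis using assms by simp
next
  case (Suc n)
  thus ?thesis using assms by simp
qed



lemma no_int_max:
  fixes eta :: "real \<times> real \<Rightarrow> real"
  assumes D0: "Dif eta" and D1: "Dif (pdx eta)" and D2: "Dif (pdy eta)"
    and lap0: "\<forall>p\<in>stripR. lap eta p = 0"
    and dl: "\<delta> > 0" and q: "0 < qy" "qy < 1" and r: "r > 0"
    and mxh: "\<And>t. \<bar>t - qx\<bar> < r \<Longrightarrow>
        eta (t + h, qy) - eta (t - h, qy) + \<epsilon> * (sin (k * (t - a)) * sinh (k * qy)) + \<delta> * qy\<^sup>2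
        \<le> eta (qx + h, qy) - eta (qx - h, qy) + \<epsilon> * (sin (k * (qx - a)) * sinh (k * qy)) + \<delta> * qy\<^sup>2"
    and mxv: "\<And>s. \<bar>s - qy\<bar> < r \<Longrightarrow>
        eta (qx + h, s) - eta (qx - h, s) + \<epsilon> * (sin (k * (qx - a)) * sinh (k * s)) + \<delta> * s\<^sup>2
        \<le> eta (qx + h, qy) - eta (qx - h, qy) + \<epsilon> * (sin (k * (qx - a)) * sinh (k * qy)) + \<delta> * qy\<^sup>2"
  shows False
proof -
  have y01: "0 \<le> qy" "qy \<le> 1" using q by auto
  have shx: "((\<lambda>t. f (t + c, qy)) has_real_derivative pdx f (t + c, qy)) (at t)" if "Dif f" for f c t
    using pdx_line[OF that y01, of "t + c"] DERIV_shift[of "\<lambda>t. f (t, qy)"] by simp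
  have hx1: "((\<lambda>t. eta (t + h, qy) - eta (t - h, qy) + \<epsilon> * (sin (k * (t - a)) * sinh (k * qy)) + \<delta> * qy\<^sup>2)
      has_real_derivative
      (pdx eta (t + h, qy) - pdx eta (t - h, qy) + \<epsilon> * (k * cos (k * (t - a)) * sinh (k * qy)))) (at t)" for t
    using shx[OF D0, of h t] shx[OF D0, of "-h" t]
    by (auto intro!: derivative_eq_intros)
  have hx2: "((\<lambda>t. pdx eta (t + h, qy) - pdx eta (t - h, qy) + \<epsilon> * (k * cos (k * (t - a)) * sinh (k * qy)))
      has_real_derivative
      (pdx (pdx eta) (qx + h, qy) - pdx (pdx eta) (qx - h, qy) - \<epsilon> * (k * k * sin (k * (qx - a)) * sinh (k * qy)))) (at qx)"
    using shx[OF D1, of h qx] shx[OF D1, of "-h" qx]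
    by (auto intro!: derivative_eq_intros)
  have A: "pdx (pdx eta) (qx + h, qy) - pdx (pdx eta) (qx - h, qy) - \<epsilon> * (k * k * sin (k * (qx - a)) * sinh (k * qy)) \<le> 0"
    by (rule sec_max[OF r hx1 hx2 mxh])
  define r' where "r' = min r (min qy (1 - qy))"
  have r': "r' > 0" "r' \<le> r" using r q by (auto simp: r'_def)
  have shy: "((\<lambda>s. f (c, s)) has_real_derivative pdy f (c, s)) (at s)" if "Dif f" "\<bar>s - qy\<bar> < r'" for f c s
    using pdy_line_at[OF that(1)] that(2) by (auto simp: r'_def)
  have hy1: "((\<lambda>s. eta (qx + h, s) - eta (qx - h, s) + \<epsilon> * (sin (k * (qx - a)) * sinh (k * s)) + \<delta> * s\<^sup>2)
      has_real_derivative
      (pdy eta (qx + h, s) - pdy eta (qx - h, s) + \<epsilon> * (sin (k * (qx - a)) * (k * cosh (k * s))) + \<delta> * (2 * s))) (at s)"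
    if "\<bar>s - qy\<bar> < r'" for s
    using shy[OF D0 that, of "qx + h"] shy[OF D0 that, of "qx - h"]
    by (auto intro!: derivative_eq_intros)
  have qin: "\<bar>qy - qy\<bar> < r'" using r' by simp
  have hy2: "((\<lambda>s. pdy eta (qx + h, s) - pdy eta (qx - h, s) + \<epsilon> * (sin (k * (qx - a)) * (k * cosh (k * s))) + \<delta> * (2 * s))
      has_real_derivative
      (pdy (pdy eta) (qx + h, qy) - pdy (pdy eta) (qx - h, qy) + \<epsilon> * (sin (k * (qx - a)) * (k * k * sinh (k * qy))) + \<delta> * 2)) (at qy)"
    using shy[OF D2 qin, of "qx + h"] shy[OF D2 qin, of "qx - h"]
    by (auto intro!: derivative_eq_intros)
  have B: "pdy (pdy eta) (qx + h, qy) - pdy (pdy eta) (qx - h, qy) + \<epsilon> * (sin (k * (qx - a)) * (k * k * sinh (k * qy))) + \<delta> * 2 \<le> 0"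
    by (rule sec_max[OF r'(1) hy1 hy2]) (use mxv r' in auto)
  have "lap eta (qx + h, qy) = 0" "lap eta (qx - h, qy) = 0"
    using lap0 q by (auto simp: stripR_def)
  hence "pdx (pdx eta) (qx + h, qy) + pdy (pdy eta) (qx + h, qy) = 0"
        "pdx (pdx eta) (qx - h, qy) + pdy (pdy eta) (qx - h, qy) = 0"
    by (auto simp: lap_def)
  with A B dl show False by (simp add: algebra_simps)
qed



definition Uf :: "(real \<times> real \<Rightarrow> real) \<Rightarrow> real \<Rightarrow> real \<Rightarrow> real \<Rightarrow> real \<Rightarrow> real \<Rightarrow> real \<Rightarrow> real \<Rightarrow> real" where
  "Uf eta h \<epsilon> k a \<delta> x y = eta (x + h, y) - eta (x - h, y) + \<epsilon> * (sin (k * (x - a)) * sinh (k * y)) + \<delta> * y\<^sup>2"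

lemma maxp:
  fixes eta :: "real \<times> real \<Rightarrow> real"
  assumes D0: "Dif eta" and D1: "Dif (pdx eta)" and D2: "Dif (pdy eta)"
    and lap0: "\<forall>p\<in>stripR. lap eta p = 0"
    and cont: "continuous_on stripClosed eta"
    and dl: "\<delta> > 0" and ab: "a0 < b0"
    and bd: "\<And>x y. x \<in> {a0..b0} \<Longrightarrow> y \<in> {0..1} \<Longrightarrow> (x = a0 \<or> x = b0 \<or> y = 0 \<or> y = 1) \<Longrightarrow>
              Uf eta h \<epsilon> k a \<delta> x y \<le> M"
    and xy: "x \<in> {a0..b0}" "y \<in> {0..1}"
  shows "Uf eta h \<epsilon> k a \<delta> x y \<le> M"
proof -
  let ?K = "{a0..b0} \<times> {0..1::real}"
  let ?u = "\<lambda>p. Uf eta h \<epsilon> k a \<delta> (fst p) (snd p)"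
  have c1: "continuous_on ?K (\<lambda>p. eta (fst p + c, snd p))" for c
  proof (rule continuous_on_compose2[OF cont])
    show "continuous_on ?K (\<lambda>p. (fst p + c, snd p))" by (intro continuous_intros)
    show "(\<lambda>p. (fst p + c, snd p)) ` ?K \<subseteq> stripClosed" by (auto simp: stripClosed_def)
  qed
  have "continuous_on ?K ?u"
    unfolding Uf_def using c1[of h] c1[of "-h"]
    by (auto intro!: continuous_intros)
  moreover have "compact ?K" by (intro compact_Times compact_Icc)
  moreover have "?K \<noteq> {}" using ab by auto
  ultimately obtain q where q: "q \<in> ?K" "\<And>z. z \<in> ?K \<Longrightarrow> ?u z \<le> ?u q"
    using continuous_attains_sup[of ?K ?u] by blast
  obtain qx qy where qq: "q = (qx, qy)" by force
  have "?u q \<le> M"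
  proof (cases "qx = a0 \<or> qx = b0 \<or> qy = 0 \<or> qy = 1")
    case True
    thus ?thesis using bd q(1) qq by auto
  next
    case False
    hence i: "a0 < qx" "qx < b0" "0 < qy" "qy < 1" using q(1) qq by auto
    define r where "r = min (min (qx - a0) (b0 - qx)) (min qy (1 - qy))"
    have r: "r > 0" using i by (simp add: r_def)
    have mxh: "Uf eta h \<epsilon> k a \<delta> t qy \<le> Uf eta h \<epsilon> k a \<delta> qx qy" if "\<bar>t - qx\<bar> < r" for t
      using q(2)[of "(t, qy)"] that i qq by (auto simp: r_def abs_less_iff)
    have mxv: "Uf eta h \<epsilon> k a \<delta> qx s \<le> Uf eta h \<epsilon> k a \<delta> qx qy" if "\<bar>s - qy\<bar> < r" for s
      using q(2)[of "(qx, s)"] that i qq by (auto simp: r_def abs_less_iff)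
    have False
      by (rule no_int_max[OF D0 D1 D2 lap0 dl i(3,4) r, of qx h \<epsilon> k a])
         (use mxh mxv in \<open>auto simp: Uf_def\<close>)
    thus ?thesis ..
  qed
  moreover have "?u (x, y) \<le> ?u q" using q(2) xy by auto
  ultimately show ?thesis by simp
qed

lemma symdiff:
  fixes g :: "real \<Rightarrow> real"
  assumes "DERIV g x :> L"
  shows "((\<lambda>h. (g (x + h) - g (x - h)) / (2 * h)) \<longlongrightarrow> L) (at_right 0)"
proof -
  have l1: "((\<lambda>h. (g (x + h) - g x) / h) \<longlongrightarrow> L) (at 0)" using assms by (simp add: DERIV_def)
  have "DERIV (\<lambda>t. g (- t)) (- x) :> - L" using DERIV_mirror[where f=g and x="- x" and y=L] assms by simp
  hence l2: "((\<lambda>h. (g (x - h) - g x) / h) \<longlongrightarrow> - L) (at 0)" by (simp add: DERIV_def)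
  have "((\<lambda>h. ((g (x + h) - g x) / h - (g (x - h) - g x) / h) / 2) \<longlongrightarrow> (L - - L) / 2) (at 0)"
    by (intro tendsto_intros l1 l2) simp
  moreover have "(\<lambda>h. ((g (x + h) - g x) / h - (g (x - h) - g x) / h) / 2) = (\<lambda>h. (g (x + h) - g (x - h)) / (2 * h))"
    by (rule ext) (simp add: field_simps diff_divide_distrib)
  ultimately have "((\<lambda>h. (g (x + h) - g (x - h)) / (2 * h)) \<longlongrightarrow> L) (at 0)" by simp
  thus ?thesis by (rule tendsto_mono[OF at_le, rotated]) simp
qed



theorem lemma5p1:
  fixes gam psit psit' :: "real \<Rightarrow> real"
    and psi eta :: "(real \<times> real) \<Rightarrow> real"
    and alpha beta mu :: real
  assumes beta: "0 < beta" "beta < 1"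
    and gam: "C21_loc gam"
    and triv_d1: "\<And>t. t \<in> {0..1} \<Longrightarrow> (psit has_real_derivative psit' t) (at t within {0..1})"
    and triv_d2: "\<And>t. t \<in> {0..1} \<Longrightarrow> (psit' has_real_derivative - gam (psit t)) (at t within {0..1})"
    and triv_bc: "psit 0 = 0" "psit 1 = 1"
    and triv_pos: "\<And>t. t \<in> {0..1} \<Longrightarrow> psit' t > 0"
    and mu: "mu = (psit' 1)\<^sup>2"
    and sol: "solitary_wave gam psit mu beta psi eta alpha"
    and vneg: "\<And>p. p \<in> Gamma_plus \<union> stripR_plus \<Longrightarrow> vel_v psi eta p < 0"
  shows "\<forall>p \<in> Gamma_plus \<union> stripR_plus. pdx eta p < 0"
proof -
  have psiG: "\<And>p. p \<in> GammaSet \<Longrightarrow> psi p = 1"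
    and etaB: "\<And>p. p \<in> BottomSet \<Longrightarrow> eta p = 0"
    and lap0: "\<forall>p\<in>stripR. lap eta p = 0"
    and lim: "\<And>e. e > 0 \<Longrightarrow> \<exists>M. \<forall>x y. M \<le> \<bar>x\<bar> \<and> 0 \<le> y \<and> y \<le> 1 \<longrightarrow>
          \<bar>psi (x, y) - psit y\<bar> < e \<and> \<bar>eta (x, y) - y\<bar> < e"
    and Cpsi: "Ckb 3 psi" and Ceta: "Ckb 3 eta"
    and even: "\<And>x y. (x, y) \<in> stripClosed \<Longrightarrow> psi (- x, y) = psi (x, y) \<and> eta (- x, y) = eta (x, y)"
    using sol unfolding solitary_wave_def C3beta_b_def by blast+
  have Ce3: "Ckb (Suc (Suc (Suc 0))) eta" and Cp3: "Ckb (Suc (Suc (Suc 0))) psi"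
    using Ceta Cpsi by (simp_all add: numeral_3_eq_3)
  have eD0: "Dif eta" and eC: "continuous_on stripClosed eta"
    using Ckb_Suc_D[OF Ce3] by simp_all
  have Ce2x: "Ckb (Suc (Suc 0)) (pdx eta)" and Ce2y: "Ckb (Suc (Suc 0)) (pdy eta)"
    using Ckb_Suc_D[OF Ce3] by simp_all
  have eD1: "Dif (pdx eta)" and exC: "continuous_on stripClosed (pdx eta)"
    using Ckb_Suc_D[OF Ce2x] by simp_all
  have eD2: "Dif (pdy eta)" using Ckb_Suc_D[OF Ce2y] by simp_all
  have pD0: "Dif psi" using Ckb_Suc_D[OF Cp3] by simp_all
  have Cp2y: "Ckb (Suc (Suc 0)) (pdy psi)" using Ckb_Suc_D[OF Cp3] by simp_all
  have pD2: "Dif (pdy psi)" and pyC: "continuous_on stripClosed (pdy psi)"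
    using Ckb_Suc_D[OF Cp2y] by simp_all
  have "Ckb (Suc 0) (pdy (pdy psi))" using Ckb_Suc_D[OF Cp2y] by simp_all
  hence "bounded (pdy (pdy psi) ` stripClosed)" using Ckb_0_D by blast
  then obtain B where B: "\<And>p. p \<in> stripClosed \<Longrightarrow> \<bar>pdy (pdy psi) p\<bar> \<le> B"
    unfolding bounded_real by blast

  have prod: "pdy psi (x, 1) * pdx eta (x, 1) < 0" if "x > 0" for x
  proof -
    have d: "((\<lambda>t. psi (t, 1)) has_real_derivative pdx psi (x, 1)) (at x)"
      using pdx_line[OF pD0, of 1 x] by simp
    have "(\<lambda>t. psi (t, 1)) = (\<lambda>t. 1)" using psiG by (auto simp: GammaSet_def)
    hence "pdx psi (x, 1) = 0" using d DERIV_const DERIV_unique by metis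
    moreover have "vel_v psi eta (x, 1) < 0" using vneg[of "(x, 1)"] that by (simp add: Gamma_plus_def)
    moreover have "gradsq eta (x, 1) \<ge> 0" by (simp add: gradsq_def)
    ultimately show ?thesis by (auto simp: vel_v_def divide_less_0_iff)
  qed

  define C where "C = \<bar>B\<bar> + 1"
  have C: "C > 0" "\<And>p. p \<in> stripClosed \<Longrightarrow> \<bar>pdy (pdy psi) p\<bar> \<le> C"
    using B by (force simp: C_def)+
  have "continuous_on {0..1} psit'" using triv_d2 by (rule DERIV_continuous_on)
  then obtain ts where ts: "ts \<in> {0..1}" "\<And>t. t \<in> {0..1} \<Longrightarrow> psit' ts \<le> psit' t"
    using continuous_attains_inf[of "{0..1::real}" psit'] by auto
  define m0 where "m0 = psit' ts"
  have m0: "m0 > 0" "\<And>t. t \<in> {0..1} \<Longrightarrow> m0 \<le> psit' t"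
    using ts triv_pos unfolding m0_def by auto
  define h where "h = min (1/2) (m0 / (2 * C))"
  have h: "0 < h" "h \<le> 1/2" "C * h \<le> m0 / 2"
    using m0 C by (auto simp: h_def min_def field_simps)
  have psit_h: "psit (1 - h) \<le> 1 - h * m0"
  proof -
    have "\<And>t. t \<in> {1 - h..1} \<Longrightarrow> (psit has_real_derivative psit' t) (at t within {1 - h..1})"
      using h by (intro DERIV_subset[OF triv_d1]) auto
    then obtain z where z: "1 - h < z" "z < 1" "psit 1 - psit (1 - h) = (1 - (1 - h)) * psit' z"
      using mvt_within[of "1 - h" 1 psit psit'] h by auto
    have "m0 \<le> psit' z" using m0(2)[of z] z h by auto
    hence hm: "h * m0 \<le> h * psit' z" using h by (simp add: mult_left_mono)
    have "1 - psit (1 - h) = h * psit' z" using z triv_bc by simp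
    thus ?thesis using hm by linarith
  qed
  have psiy_pos: "pdy psi (x, 1) > 0" if "x > 0" for x
  proof (rule ccontr)
    assume "\<not> pdy psi (x, 1) > 0"
    hence neg1: "pdy psi (x, 1) < 0" using prod[OF that]
      by (cases "pdy psi (x, 1) = 0") auto
    have negall: "pdy psi (x2, 1) < 0" if x2: "x2 \<ge> x" for x2
    proof (rule ccontr)
      assume "\<not> pdy psi (x2, 1) < 0"
      hence "pdy psi (x2, 1) \<ge> 0" by simp
      moreover have "continuous_on {x..x2} (\<lambda>t. pdy psi (t, 1))"
        by (rule continuous_on_compose2[OF pyC]) (auto intro!: continuous_intros simp: stripClosed_def)
      ultimately obtain z where z: "x \<le> z" "z \<le> x2" "pdy psi (z, 1) = 0"
        using IVT'[of "\<lambda>t. pdy psi (t, 1)" x 0 x2] neg1 x2 by auto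
      thus False using prod[of z] \<open>x > 0\<close> by simp
    qed
    obtain M where M: "\<And>x y. M \<le> \<bar>x\<bar> \<Longrightarrow> 0 \<le> y \<Longrightarrow> y \<le> 1 \<Longrightarrow>
          \<bar>psi (x, y) - psit y\<bar> < h * m0 / 2 \<and> \<bar>eta (x, y) - y\<bar> < h * m0 / 2"
      using lim[of "h * m0 / 2"] h m0 by auto
    define X where "X = max M x"
    have X: "X \<ge> x" "M \<le> \<bar>X\<bar>" using that by (auto simp: X_def)
    have "\<bar>psi (X, 1 - h) - psit (1 - h)\<bar> < h * m0 / 2"
      using M[OF X(2), of "1 - h"] h by auto
    hence "psi (X, 1 - h) - psit (1 - h) < h * m0 / 2" by (simp only: abs_less_iff)
    hence up: "psi (X, 1 - h) < 1 - h * m0 / 2" using psit_h by linarith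
    have tb: "\<bar>psi (X, 1) - psi (X, 1 - h) - (1 - (1 - h)) * pdy psi (X, 1)\<bar> \<le> C * (1 - (1 - h))\<^sup>2"
    proof (rule taylor_bound[where g'' = "\<lambda>s. pdy (pdy psi) (X, s)"])
      show "1 - h < (1::real)" using h by simp
      show "((\<lambda>s. psi (X, s)) has_real_derivative pdy psi (X, t)) (at t within {1 - h..1})"
        if "t \<in> {1 - h..1}" for t
        using h that by (intro DERIV_subset[OF pdy_line[OF pD0]]) auto
      show "((\<lambda>s. pdy psi (X, s)) has_real_derivative pdy (pdy psi) (X, t)) (at t within {1 - h..1})"
        if "t \<in> {1 - h..1}" for t
        using h that by (intro DERIV_subset[OF pdy_line[OF pD2]]) auto
      show "\<bar>pdy (pdy psi) (X, t)\<bar> \<le> C" if "t \<in> {1 - h..1}" for t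
        using C(2)[of "(X, t)"] h that by (auto simp: stripClosed_def)
    qed
    have p1: "psi (X, 1) = 1" using psiG by (simp add: GammaSet_def)
    have py: "h * pdy psi (X, 1) < 0" using negall X h by (simp add: mult_pos_neg)
    have Ch: "C * h\<^sup>2 \<le> h * m0 / 2" using h by (simp add: power2_eq_square)
    have hh: "1 - (1 - h) = h" by simp
    have "1 - psi (X, 1 - h) - h * pdy psi (X, 1) \<le> C * h\<^sup>2"
      using tb unfolding p1 hh by (simp only: abs_le_iff)
    hence "psi (X, 1 - h) > 1 - h * m0 / 2" using py Ch by linarith
    thus False using up by simp
  qed
  have Gam: "pdx eta (x, 1) < 0" if "x > 0" for x
    using prod[OF that] psiy_pos[OF that] by (simp add: mult_less_0_iff)

  have decr: "eta (b', 1) < eta (a', 1)" if ab: "0 \<le> a'" "a' < b'" for a' b'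
  proof -
    have "\<forall>t. a' \<le> t \<and> t \<le> b' \<longrightarrow> ((\<lambda>t. eta (t, 1)) has_real_derivative pdx eta (t, 1)) (at t)"
      using pdx_line[OF eD0, of 1] by simp
    then obtain z where z: "a' < z" "z < b'" "eta (b', 1) - eta (a', 1) = (b' - a') * pdx eta (z, 1)"
      using MVT2[OF ab(2), of "\<lambda>t. eta (t, 1)" "\<lambda>t. pdx eta (t, 1)"] by auto
    have "pdx eta (z, 1) < 0" using Gam[of z] z ab by simp
    hence "(b' - a') * pdx eta (z, 1) < 0" using ab by (simp add: mult_pos_neg)
    thus ?thesis using z by simp
  qed
  have topD: "eta (x + hh, 1) - eta (x - hh, 1) \<le> 0" if "x \<ge> 0" "hh > 0" for x hh
  proof (cases "x \<ge> hh")
    case True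
    thus ?thesis using decr[of "x - hh" "x + hh"] that by simp
  next
    case False
    have "eta (x - hh, 1) = eta (hh - x, 1)"
      using even[of "hh - x" 1] by (simp add: stripClosed_def)
    moreover have "eta (x + hh, 1) \<le> eta (hh - x, 1)"
    proof (cases "x = 0")
      case True thus ?thesis by simp
    next
      case False thus ?thesis using decr[of "hh - x" "x + hh"] that \<open>\<not> x \<ge> hh\<close> by simp
    qed
    ultimately show ?thesis by simp
  qed

  (* Step 4: weak maximum principle for the symmetric difference *)
  have weak: "eta (x + hh, y) - eta (x - hh, y) \<le> 0" if xy: "x \<ge> 0" "0 \<le> y" "y \<le> 1" and hh: "hh > 0" for x y hh
  proof (rule ccontr)
    define e where "e = eta (x + hh, y) - eta (x - hh, y)"
    assume "\<not> eta (x + hh, y) - eta (x - hh, y) \<le> 0"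
    hence e: "e > 0" by (simp add: e_def)
    obtain M where M: "\<And>x y. M \<le> \<bar>x\<bar> \<Longrightarrow> 0 \<le> y \<Longrightarrow> y \<le> 1 \<Longrightarrow> \<bar>eta (x, y) - y\<bar> < e / 4"
      using lim[of "e / 4"] e by auto
    define R where "R = max (\<bar>M\<bar> + hh + 1) (x + 1)"
    have R: "R > 0" "x < R" "M \<le> \<bar>R + hh\<bar>" "M \<le> \<bar>R - hh\<bar>" using hh xy by (auto simp: R_def)
    have "Uf eta hh 0 0 0 (e / 4) x y \<le> 3 * e / 4"
    proof (rule maxp[OF eD0 eD1 eD2 lap0 eC _ R(1)])
      show "0 < e / 4" using e by simp
      show "x \<in> {0..R}" "y \<in> {0..1}" using xy R by auto
      fix x' y' :: real
      assume x': "x' \<in> {0..R}" and y': "y' \<in> {0..1}" and bdry: "x' = 0 \<or> x' = R \<or> y' = 0 \<or> y' = 1"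
      have y2: "y'\<^sup>2 \<le> 1" using y' by (simp add: power_le_one)
      hence y2e: "e / 4 * y'\<^sup>2 \<le> e / 4" using e by (simp add: mult_left_le)
      have "eta (x' + hh, y') - eta (x' - hh, y') \<le> e / 2"
      proof -
        consider "x' = 0" | "x' = R" | "y' = 0" | "y' = 1" using bdry by blast
        thus ?thesis
        proof cases
          case 1
          thus ?thesis using even[of hh y'] y' e by (simp add: stripClosed_def)
        next
          case 2
          have "\<bar>eta (R + hh, y') - y'\<bar> < e / 4" "\<bar>eta (R - hh, y') - y'\<bar> < e / 4"
            using M[OF R(3)] M[OF R(4)] y' by auto
          moreover have "eta (x' + hh, y') - eta (x' - hh, y') = eta (R + hh, y') - eta (R - hh, y')"
            using 2 by simp
          ultimately show ?thesis unfolding abs_less_iff by linarith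
        next
          case 3
          thus ?thesis using etaB[of "(x' + hh, 0)"] etaB[of "(x' - hh, 0)"] e by (simp add: BottomSet_def)
        next
          case 4
          thus ?thesis using topD[of x' hh] x' hh e by simp
        qed
      qed
      thus "Uf eta hh 0 0 0 (e / 4) x' y' \<le> 3 * e / 4" using y2e by (simp add: Uf_def)
    qed
    moreover have "Uf eta hh 0 0 0 (e / 4) x y \<ge> e"
      using e by (simp add: Uf_def e_def)
    ultimately show False using e by simp
  qed

  have inter: "pdx eta (x0, y0) < 0" if p: "x0 > 0" "0 < y0" "y0 < 1" for x0 y0
  proof -
    define a0 where "a0 = x0 / 2"
    define b0 where "b0 = x0 + 1"
    define L where "L = b0 - a0"
    define k where "k = pi / L"
    have L: "L > 0" "L = x0 / 2 + 1" using p by (auto simp: L_def a0_def b0_def)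
    have k: "k > 0" "k * L = pi" using L by (auto simp: k_def)
    have "continuous_on {x0/4..x0+2} (\<lambda>t. pdx eta (t, 1))"
      by (rule continuous_on_compose2[OF exC]) (auto intro!: continuous_intros simp: stripClosed_def)
    then obtain tm where tm: "tm \<in> {x0/4..x0+2}" "\<And>t. t \<in> {x0/4..x0+2} \<Longrightarrow> pdx eta (t, 1) \<le> pdx eta (tm, 1)"
      using continuous_attains_sup[of "{x0/4..x0+2}" "\<lambda>t. pdx eta (t, 1)"] p by auto
    define m1 where "m1 = - pdx eta (tm, 1)"
    have m1: "m1 > 0" "\<And>t. t \<in> {x0/4..x0+2} \<Longrightarrow> pdx eta (t, 1) \<le> - m1"
      using tm Gam[of tm] p unfolding m1_def by auto
    define S where "S = sinh k"
    have S: "S > 0" using k by (simp add: S_def)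
    define Hp where "Hp = sin (k * (x0 - a0)) * sinh (k * y0)"
    have "k * (x0 - a0) < pi"
    proof -
      have "x0 - a0 < L" using L p by (simp add: a0_def)
      hence "k * (x0 - a0) < k * L" using k(1) by (rule mult_strict_left_mono)
      thus ?thesis using k(2) by simp
    qed
    moreover have "0 < k * (x0 - a0)" using k p by (simp add: a0_def)
    ultimately have "sin (k * (x0 - a0)) > 0" by (simp add: sin_gt_zero)
    moreover have "sinh (k * y0) > 0" using k p by simp
    ultimately have Hp: "Hp > 0" by (simp add: Hp_def)
    define c where "c = m1 * Hp / S"
    have c: "c > 0" using m1 Hp S by (simp add: c_def)
    have strict: "eta (x0 + hh, y0) - eta (x0 - hh, y0) \<le> - (2 * hh * c)"
      if hh: "0 < hh" "hh < x0 / 4" "hh < 1" for hh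
    proof -
      define \<epsilon> where "\<epsilon> = 2 * hh * m1 / S"
      have ep: "\<epsilon> \<ge> 0" "\<epsilon> * S = 2 * hh * m1" "\<epsilon> * Hp = 2 * hh * c"
        using S m1 hh by (auto simp: \<epsilon>_def c_def)
      have ab0: "a0 < b0" using p by (simp add: a0_def b0_def)
      have U: "Uf eta hh \<epsilon> k a0 \<delta> x0 y0 \<le> \<delta>" if dl: "\<delta> > 0" for \<delta>
      proof (rule maxp[OF eD0 eD1 eD2 lap0 eC dl ab0])
        show "x0 \<in> {a0..b0}" "y0 \<in> {0..1}" using p by (auto simp: a0_def b0_def)
        fix x' y' :: real
        assume x': "x' \<in> {a0..b0}" and y': "y' \<in> {0..1}" and bdry: "x' = a0 \<or> x' = b0 \<or> y' = 0 \<or> y' = 1"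
        have y2: "y'\<^sup>2 \<le> 1" using y' by (simp add: power_le_one)
        hence y2e: "\<delta> * y'\<^sup>2 \<le> \<delta>" using dl by (simp add: mult_left_le)
        have x'0: "x' \<ge> 0" using x' p by (simp add: a0_def)
        have "eta (x' + hh, y') - eta (x' - hh, y') + \<epsilon> * (sin (k * (x' - a0)) * sinh (k * y')) \<le> 0"
        proof -
          consider "x' = a0" | "x' = b0" | "y' = 0" | "y' = 1" using bdry by blast
          thus ?thesis
          proof cases
            case 1
            thus ?thesis using weak[of x' y' hh] x'0 y' hh by simp
          next
            case 2
            have "k * (x' - a0) = pi" using 2 k by (simp add: L_def)
            thus ?thesis using weak[of x' y' hh] x'0 y' hh by simp
          next
            case 3
            thus ?thesis using etaB[of "(x' + hh, 0)"] etaB[of "(x' - hh, 0)"] by (simp add: BottomSet_def)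
          next
            case 4
            have "\<forall>t. x' - hh \<le> t \<and> t \<le> x' + hh \<longrightarrow> ((\<lambda>t. eta (t, 1)) has_real_derivative pdx eta (t, 1)) (at t)"
              using pdx_line[OF eD0, of 1] by simp
            then obtain z where z: "x' - hh < z" "z < x' + hh"
                "eta (x' + hh, 1) - eta (x' - hh, 1) = (x' + hh - (x' - hh)) * pdx eta (z, 1)"
              using MVT2[of "x' - hh" "x' + hh" "\<lambda>t. eta (t, 1)" "\<lambda>t. pdx eta (t, 1)"] hh by auto
            have "z \<in> {x0/4..x0+2}" using z x' hh by (auto simp: a0_def b0_def)
            hence "pdx eta (z, 1) \<le> - m1" by (rule m1(2))
            hence "(2 * hh) * pdx eta (z, 1) \<le> (2 * hh) * (- m1)" using hh by (intro mult_left_mono) auto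
            hence D1: "eta (x' + hh, 1) - eta (x' - hh, 1) \<le> - (2 * hh * m1)" using z by simp
            have "sin (k * (x' - a0)) * S \<le> 1 * S" using S by (intro mult_right_mono) auto
            hence "\<epsilon> * (sin (k * (x' - a0)) * S) \<le> \<epsilon> * S" using ep(1) by (intro mult_left_mono) auto
            hence "\<epsilon> * (sin (k * (x' - a0)) * sinh (k * y')) \<le> 2 * hh * m1" using 4 ep(2) unfolding S_def by simp
            thus ?thesis using D1 4 by simp
          qed
        qed
        thus "Uf eta hh \<epsilon> k a0 \<delta> x' y' \<le> \<delta>" using y2e by (simp add: Uf_def)
      qed
      have "eta (x0 + hh, y0) - eta (x0 - hh, y0) + \<epsilon> * Hp \<le> 0"
      proof (rule field_le_epsilon)
        fix \<delta> :: real assume "0 < \<delta>"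
        have "0 \<le> \<delta> * y0\<^sup>2" using \<open>0 < \<delta>\<close> by simp
        thus "eta (x0 + hh, y0) - eta (x0 - hh, y0) + \<epsilon> * Hp \<le> 0 + \<delta>"
          using U[OF \<open>0 < \<delta>\<close>] by (simp add: Uf_def Hp_def)
      qed
      thus ?thesis using ep by simp
    qed
    have der: "DERIV (\<lambda>t. eta (t, y0)) x0 :> pdx eta (x0, y0)"
      using pdx_line[OF eD0, of y0 x0] p by simp
    have "pdx eta (x0, y0) \<le> - c"
    proof (rule tendsto_upperbound[OF symdiff[OF der]])
      show "\<forall>\<^sub>F h in at_right 0. (eta (x0 + h, y0) - eta (x0 - h, y0)) / (2 * h) \<le> - c"
      proof (rule eventually_at_rightI[of 0 "min (x0 / 4) 1"])
        fix hh assume "hh \<in> {0<..<min (x0 / 4) 1}"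
        hence hh: "0 < hh" "hh < x0 / 4" "hh < 1" by auto
        have "eta (x0 + hh, y0) - eta (x0 - hh, y0) \<le> (2 * hh) * (- c)" using strict[OF hh] by simp
        thus "(eta (x0 + hh, y0) - eta (x0 - hh, y0)) / (2 * hh) \<le> - c"
          using hh by (simp add: divide_le_eq mult.commute)
      qed (use p in simp)
    qed simp
    thus ?thesis using c by simp
  qed
  show ?thesis
  proof
    fix p assume "p \<in> Gamma_plus \<union> stripR_plus"
    then obtain x y where "p = (x, y)" "(y = 1 \<and> 0 < x) \<or> (0 < y \<and> y < 1 \<and> 0 < x)"
      by (auto simp: Gamma_plus_def stripR_plus_def)
    thus "pdx eta p < 0" using Gam inter by auto
  qed

qed
end
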